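(* If $\mathcal U\in\mathcal M_*$ and $\mathcal V\in\mathcal M_{\le\omega}$, then $\mathcal U\cdot\mathcal V:=\{(AC,D)\mid A\in\mathcal U,\ (C,D)\in\mathcal V\}$ belongs to $\mathcal M_{\le\omega}$ (i.e. is a closed subset of $\mathcal C$).
   Context: $\Sigma$ is a finite alphabet, $\Sigma^{\le\omega}=\Sigma^*\cup\Sigma^\omega$; concatenation $w\cdot u$ equals $wu$ if $w$ is finite and $w$ if $w$ is infinite, extended pointwise to languages. For $A\subseteq\Sigma^*$, $A^\omega$ is the set of all words $w_0w_1w_2\cdots$ with $w_i\in A$, and $CD^\omega$ means $C\cdot D^\omega$. Fix an extended Büchi automaton $\mathfrak A=(Q,\Sigma,\delta,q_0,F)$ (finite states, $\delta:Q\times\Sigma\to\mathcal P(Q)$, initial $q_0$, final $F$). For $w\in\Sigma^*$ write $p\overset{w}{\leadsto}q$ if $q$ is reachable from $p$ reading $w$, and $p\overset{w}{\leadsto}_F q$ if there are $q''\in F$, $w=uv$ with $p\overset{u}{\leadsto}q''\overset{v}{\leadsto}q$. For $w,u\in\Sigma^+$, $w\sim u$ iff for all $p,q$: $p\overset{w}{\leadsto}q\Leftrightarrow p\overset{u}{\leadsto}q$ and $p\overset{w}{\leadsto}_Fq\Leftrightarrow p\overset{u}{\leadsto}_Fq$. $\mathcal Q=\Sigma^+/{\sim}\uplus\{[\epsilon]\}$ with $[\epsilon]=\{\epsilon\}$; concatenation of classes is well defined (monoid with unit $[\epsilon]$). Let $\mathcal C=\{(C,D)\mid C,D\in\mathcal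 Q,\ CD=C,\ DD=D\}$. Define $\mathfrak f(V)=\{(C,D)\in\mathcal C\mid CD^\omega\cap V\neq\emptyset\}$ and $\mathfrak g(\mathcal V)=\bigcup_{(C,D)\in\mathcal V}CD^\omega$. $\mathcal V\subseteq\mathcal C$ is closed if $\mathfrak f(\mathfrak g(\mathcal V))=\mathcal V$, i.e. whenever $(C,D)\in\mathcal V$, $(U,V)\in\mathcal C$ and $UV^\omega\cap CD^\omega\ne\emptyset$ then $(U,V)\in\mathcal V$; closure $\mathfrak c(\mathcal V)=\bigcup_{n\ge1}(\mathfrak f\circ\mathfrak g)^n(\mathcal V)$. $\mathcal M_{\le\omega}=\{\mathfrak c(\mathfrak f(V))\mid V\subseteq\Sigma^{\le\omega}\}$ (equivalently the closed subsets of $\mathcal C$) and $\mathcal M_*=\mathcal P(\mathcal Q)$. *)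

theory Defs
  imports Main
begin

datatype 'a fiword = Fin "'a list" | Inf "nat \<Rightarrow> 'a"

fun wconc :: "'a fiword \<Rightarrow> 'a fiword \<Rightarrow> 'a fiword" where
  "wconc (Fin u) (Fin v) = Fin (u @ v)"
| "wconc (Fin u) (Inf f) = Inf (\<lambda>k. if k < length u then u ! k else f (k - length u))"
| "wconc (Inf f) _ = Inf f"

definition lang_conc :: "'a fiword set \<Rightarrow> 'a fiword set \<Rightarrow> 'a fiword set" where
  "lang_conc X Y = {wconc x y | x y. x \<in> X \<and> y \<in> Y}"

text \<open>Infinite concatenation w_0 w_1 w_2 ... of finite words.\<close>
definition pre :: "(nat \<Rightarrow> 'a list) \<Rightarrow> nat \<Rightarrow> 'a list" where
  "pre w n = concat (map w [0..<n])"

definition omega_concat :: "(nat \<Rightarrow> 'a list) \<Rightarrow> 'a fiword" where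
  "omega_concat w =
     (if \<exists>N. \<forall>i\<ge>N. w i = [] then Fin (pre w (LEAST N. \<forall>i\<ge>N. w i = []))
      else Inf (\<lambda>k. pre w (LEAST n. k < length (pre w n)) ! k))"

definition omega_pow :: "'a list set \<Rightarrow> 'a fiword set" where
  "omega_pow A = {omega_concat w | w. \<forall>i. w i \<in> A}"

definition CDomega :: "'a list set \<Rightarrow> 'a list set \<Rightarrow> 'a fiword set" where
  "CDomega C D = lang_conc (Fin ` C) (omega_pow D)"

fun reach :: "('q \<Rightarrow> 'a \<Rightarrow> 'q set) \<Rightarrow> 'q \<Rightarrow> 'a list \<Rightarrow> 'q \<Rightarrow> bool" where
  "reach \<delta> p [] q = (p = q)"
| "reach \<delta> p (a # w) q = (\<exists>p' \<in> \<delta> p a. reach \<delta> p' w q)"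

definition reachF :: "('q \<Rightarrow> 'a \<Rightarrow> 'q set) \<Rightarrow> 'q set \<Rightarrow> 'q \<Rightarrow> 'a list \<Rightarrow> 'q \<Rightarrow> bool" where
  "reachF \<delta> F p w q = (\<exists>q'' u v. q'' \<in> F \<and> w = u @ v \<and> reach \<delta> p u q'' \<and> reach \<delta> q'' v q)"

definition sim :: "('q \<Rightarrow> 'a \<Rightarrow> 'q set) \<Rightarrow> 'q set \<Rightarrow> 'a list \<Rightarrow> 'a list \<Rightarrow> bool" where
  "sim \<delta> F w u = (w \<noteq> [] \<and> u \<noteq> [] \<and>
     (\<forall>p q. (reach \<delta> p w q \<longleftrightarrow> reach \<delta> p u q) \<and> (reachF \<delta> F p w q \<longleftrightarrow> reachF \<delta> F p u q)))"

definition cls :: "('q \<Rightarrow> 'a \<Rightarrow> 'q set) \<Rightarrow> 'q set \<Rightarrow> 'a list \<Rightarrow> 'a list set" where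
  "cls \<delta> F w = (if w = [] then {[]} else {u. sim \<delta> F w u})"

text \<open>The monoid \<Q> = \<Sigma>^+/\<sim> \<uplus> {[\<epsilon>]}.\<close>
definition Qset :: "('q \<Rightarrow> 'a \<Rightarrow> 'q set) \<Rightarrow> 'q set \<Rightarrow> 'a list set set" where
  "Qset \<delta> F = cls \<delta> F ` UNIV"

definition cmul :: "('q \<Rightarrow> 'a \<Rightarrow> 'q set) \<Rightarrow> 'q set \<Rightarrow> 'a list set \<Rightarrow> 'a list set \<Rightarrow> 'a list set" where
  "cmul \<delta> F C D = cls \<delta> F ((SOME x. x \<in> C) @ (SOME y. y \<in> D))"

definition Cpairs :: "('q \<Rightarrow> 'a \<Rightarrow> 'q set) \<Rightarrow> 'q set \<Rightarrow> ('a list set \<times> 'a list set) set" where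
  "Cpairs \<delta> F = {(C, D). C \<in> Qset \<delta> F \<and> D \<in> Qset \<delta> F \<and> cmul \<delta> F C D = C \<and> cmul \<delta> F D D = D}"

definition fmap :: "('q \<Rightarrow> 'a \<Rightarrow> 'q set) \<Rightarrow> 'q set \<Rightarrow> 'a fiword set \<Rightarrow> ('a list set \<times> 'a list set) set" where
  "fmap \<delta> F V = {(C, D) \<in> Cpairs \<delta> F. CDomega C D \<inter> V \<noteq> {}}"

definition gmap :: "('a list set \<times> 'a list set) set \<Rightarrow> 'a fiword set" where
  "gmap \<V> = (\<Union>(C, D) \<in> \<V>. CDomega C D)"

text \<open>\<M>_{\<le>\<omega>}: the closed subsets of \<C>.\<close>
definition M_le_omega :: "('q \<Rightarrow> 'a \<Rightarrow> 'q set) \<Rightarrow> 'q set \<Rightarrow> ('a list set \<times> 'a list set) set set" where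
  "M_le_omega \<delta> F = {\<V>. \<V> \<subseteq> Cpairs \<delta> F \<and> fmap \<delta> F (gmap \<V>) = \<V>}"

definition M_star :: "('q \<Rightarrow> 'a \<Rightarrow> 'q set) \<Rightarrow> 'q set \<Rightarrow> 'a list set set set" where
  "M_star \<delta> F = Pow (Qset \<delta> F)"

definition Mprod :: "('q \<Rightarrow> 'a \<Rightarrow> 'q set) \<Rightarrow> 'q set \<Rightarrow> 'a list set set \<Rightarrow> ('a list set \<times> 'a list set) set
    \<Rightarrow> ('a list set \<times> 'a list set) set" where
  "Mprod \<delta> F \<U> \<V> = {(cmul \<delta> F A C, D) | A C D. A \<in> \<U> \<and> (C, D) \<in> \<V>}"

end

theory Submission imports Defs begin

lemma reach_append: "reach \<delta> p (w @ u) q \<longleftrightarrow> (\<exists>r. reach \<delta> p w r \<and> reach \<delta> r u q)"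
  by (induction w arbitrary: p) auto

lemma reachF_append: "reachF \<delta> F p (w @ u) q \<longleftrightarrow>
   (\<exists>r. reachF \<delta> F p w r \<and> reach \<delta> r u q) \<or> (\<exists>r. reach \<delta> p w r \<and> reachF \<delta> F r u q)"
proof
  assume "reachF \<delta> F p (w @ u) q"
  then obtain q'' x y where h: "q'' \<in> F" "w @ u = x @ y" "reach \<delta> p x q''" "reach \<delta> q'' y q"
    unfolding reachF_def by blast
  from h(2) obtain t where "(x = w @ t \<and> u = t @ y) \<or> (w = x @ t \<and> y = t @ u)"
    by (auto simp: append_eq_append_conv2)
  then show "(\<exists>r. reachF \<delta> F p w r \<and> reach \<delta> r u q) \<or> (\<exists>r. reach \<delta> p w r \<and> reachF \<delta> F r u q)"
  proof
    assume a: "x = w @ t \<and> u = t @ y"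
    then obtain r where "reach \<delta> p w r" "reach \<delta> r t q''" using h(3) reach_append by metis
    then show ?thesis using a h unfolding reachF_def by blast
  next
    assume a: "w = x @ t \<and> y = t @ u"
    then obtain r where "reach \<delta> q'' t r" "reach \<delta> r u q" using h(4) reach_append by metis
    then show ?thesis using a h unfolding reachF_def by blast
  qed
next
  assume "(\<exists>r. reachF \<delta> F p w r \<and> reach \<delta> r u q) \<or> (\<exists>r. reach \<delta> p w r \<and> reachF \<delta> F r u q)"
  then show "reachF \<delta> F p (w @ u) q"
  proof
    assume "\<exists>r. reachF \<delta> F p w r \<and> reach \<delta> r u q"
    then obtain r q'' x y where h: "q'' \<in> F" "w = x @ y" "reach \<delta> p x q''" "reach \<delta> q'' y r" "reach \<delta> r u q"
      unfolding reachF_def by blast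
    then have "reach \<delta> q'' (y @ u) q" using reach_append by metis
    then show ?thesis using h unfolding reachF_def by (metis append.assoc)
  next
    assume "\<exists>r. reach \<delta> p w r \<and> reachF \<delta> F r u q"
    then obtain r q'' x y where h: "q'' \<in> F" "u = x @ y" "reach \<delta> r x q''" "reach \<delta> q'' y q" "reach \<delta> p w r"
      unfolding reachF_def by blast
    then have "reach \<delta> p (w @ x) q''" using reach_append by metis
    then show ?thesis using h unfolding reachF_def by (metis append.assoc)
  qed
qed

definition prof where "prof \<delta> F w = (\<lambda>p q. reach \<delta> p w q, \<lambda>p q. reachF \<delta> F p w q)"

lemma cls_char: "cls \<delta> F w = {u. (u = [] \<longleftrightarrow> w = []) \<and> prof \<delta> F u = prof \<delta> F w}"
  unfolding cls_def sim_def prof_def by (auto simp: fun_eq_iff)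

lemma cls_self: "w \<in> cls \<delta> F w"
  by (simp add: cls_char)

lemma mem_cls: "u \<in> cls \<delta> F w \<longleftrightarrow> cls \<delta> F u = cls \<delta> F w"
  unfolding cls_char by auto

lemma cls_eq: "cls \<delta> F u = cls \<delta> F w \<longleftrightarrow> (u = [] \<longleftrightarrow> w = []) \<and> prof \<delta> F u = prof \<delta> F w"
proof
  assume "cls \<delta> F u = cls \<delta> F w"
  then have "u \<in> cls \<delta> F w" using cls_self by metis
  then show "(u = [] \<longleftrightarrow> w = []) \<and> prof \<delta> F u = prof \<delta> F w" unfolding cls_char by simp
next
  assume "(u = [] \<longleftrightarrow> w = []) \<and> prof \<delta> F u = prof \<delta> F w"
  then show "cls \<delta> F u = cls \<delta> F w" unfolding cls_char by simp
qed

lemma prof_app: "prof \<delta> F w = prof \<delta> F w' \<Longrightarrow> prof \<delta> F u = prof \<delta> F u' \<Longrightarrow> prof \<delta> F (w @ u) = prof \<delta> F (w' @ u')"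
  unfolding prof_def by (simp add: fun_eq_iff reach_append reachF_append)

lemma cls_app: "cls \<delta> F w = cls \<delta> F w' \<Longrightarrow> cls \<delta> F u = cls \<delta> F u' \<Longrightarrow> cls \<delta> F (w @ u) = cls \<delta> F (w' @ u')"
  unfolding cls_eq using prof_app by auto

lemma cmul_cls: "cmul \<delta> F (cls \<delta> F x) (cls \<delta> F y) = cls \<delta> F (x @ y)"
proof -
  have "(SOME x'. x' \<in> cls \<delta> F x) \<in> cls \<delta> F x" by (rule someI, rule cls_self)
  moreover have "(SOME y'. y' \<in> cls \<delta> F y) \<in> cls \<delta> F y" by (rule someI, rule cls_self)
  ultimately show ?thesis unfolding cmul_def by (metis cls_app mem_cls)
qed

lemma Qset_iff: "X \<in> Qset \<delta> F \<longleftrightarrow> (\<exists>x. X = cls \<delta> F x)"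
  unfolding Qset_def by auto

lemma Cpairs_iff: "(C, D) \<in> Cpairs \<delta> F \<longleftrightarrow> (\<exists>c d. C = cls \<delta> F c \<and> D = cls \<delta> F d \<and>
   cls \<delta> F (c @ d) = cls \<delta> F c \<and> cls \<delta> F (d @ d) = cls \<delta> F d)"
  unfolding Cpairs_def Qset_iff by (auto simp: cmul_cls; blast)

lemma cls_uniform: assumes "\<forall>i. v i \<in> cls \<delta> F w" shows "(\<forall>i. v i \<noteq> []) \<or> (\<forall>i. v i = [])"
proof (cases "w = []")
  case True
  then show ?thesis using assms by (simp add: cls_char)
next
  case False
  then show ?thesis using assms by (simp add: cls_char)
qed


lemma pre_0[simp]: "pre v 0 = []" by (simp add: pre_def)
lemma pre_Suc[simp]: "pre v (Suc n) = pre v n @ v n" by (simp add: pre_def)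

lemma pre_add: "pre v (k + n) = pre v k @ pre (\<lambda>i. v (i+k)) n"
  by (induction n) (auto simp: add.commute)

lemma pre_len: "\<forall>i. v i \<noteq> [] \<Longrightarrow> n \<le> length (pre v n)"
proof (induction n)
  case (Suc n)
  then have "v n \<noteq> []" by blast
  then have "length (v n) \<ge> 1" by (cases "v n") auto
  with Suc show ?case by simp
qed simp

lemma pre_nth_le: "n \<le> n' \<Longrightarrow> m < length (pre v n) \<Longrightarrow> pre v n' ! m = pre v n ! m"
  using pre_add[of v n "n' - n"] by (simp add: nth_append)

lemma pre_nth: "m < length (pre v n) \<Longrightarrow> m < length (pre v n') \<Longrightarrow> pre v n ! m = pre v n' ! m"
  by (metis nat_le_linear pre_nth_le)

lemma pre_empty: "\<forall>i. v i = [] \<Longrightarrow> pre v n = []"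
  by (induction n) auto

lemma omega_empty: "\<forall>i. v i = [] \<Longrightarrow> omega_concat v = Fin []"
  unfolding omega_concat_def by (simp add: pre_empty)

lemma omega_inf_eq:
  assumes ne: "\<forall>i. v i \<noteq> []" and g: "\<forall>n m. m < length (pre v n) \<longrightarrow> g m = pre v n ! m"
  shows "omega_concat v = Inf g"
proof -
  have "\<not> (\<exists>N. \<forall>i\<ge>N. v i = [])" using ne by blast
  moreover have "pre v (LEAST n. k < length (pre v n)) ! k = g k" for k
  proof -
    have "k < length (pre v (Suc k))" using pre_len[OF ne, of "Suc k"] by simp
    then have "k < length (pre v (LEAST n. k < length (pre v n)))" by (rule LeastI)
    then show ?thesis using g by simp
  qed
  ultimately show ?thesis unfolding omega_concat_def by auto
qed

definition G :: "(nat \<Rightarrow> 'a list) \<Rightarrow> nat \<Rightarrow> 'a" where "G v m = pre v (Suc m) ! m"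

lemma G_char: assumes ne: "\<forall>i. v i \<noteq> []" shows "\<forall>n m. m < length (pre v n) \<longrightarrow> G v m = pre v n ! m"
proof (intro allI impI)
  fix n m assume "m < length (pre v n)"
  moreover have "m < length (pre v (Suc m))" using pre_len[OF ne, of "Suc m"] by simp
  ultimately show "G v m = pre v n ! m" unfolding G_def using pre_nth by metis
qed

lemma omega_inf: "\<forall>i. v i \<noteq> [] \<Longrightarrow> omega_concat v = Inf (G v)"
  using omega_inf_eq G_char by blast

lemma omega_shift:
  assumes "(\<forall>i. v i \<noteq> []) \<or> (\<forall>i. v i = [])"
  shows "omega_concat v = wconc (Fin (pre v k)) (omega_concat (\<lambda>i. v (i+k)))"
  using assms
proof
  assume ne: "\<forall>i. v i \<noteq> []"
  let ?L = "length (pre v k)"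
  have ne': "\<forall>i. v (i+k) \<noteq> []" using ne by blast
  have "omega_concat (\<lambda>i. v (i+k)) = Inf (\<lambda>j. G v (j + ?L))"
  proof (rule omega_inf_eq[OF ne'], intro allI impI)
    fix n m assume m: "m < length (pre (\<lambda>i. v (i+k)) n)"
    have "G v (m + ?L) = pre v (k + n) ! (m + ?L)" using G_char[OF ne, rule_format, of "m + ?L" "k+n"] m by (simp add: pre_add)
    also have "\<dots> = pre (\<lambda>i. v (i+k)) n ! m" by (simp add: pre_add nth_append)
    finally show "G v (m + ?L) = pre (\<lambda>i. v (i+k)) n ! m" .
  qed
  moreover have "(\<lambda>m. if m < ?L then pre v k ! m else G v (m - ?L + ?L)) = G v"
    using G_char[OF ne] by (auto simp: fun_eq_iff)
  ultimately show ?thesis using omega_inf[OF ne] by simp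
next
  assume e: "\<forall>i. v i = []"
  then have "\<forall>i. v (i+k) = []" by blast
  then show ?thesis using e by (simp add: omega_empty pre_empty)
qed

lemma wconc_assoc: "wconc (Fin a) (wconc (Fin b) W) = wconc (Fin (a @ b)) W"
  by (cases W) (auto simp: fun_eq_iff nth_append)

lemma wconc_split:
  assumes eq: "wconc (Fin P) W = wconc (Fin e) W2" and le: "length e \<le> length P"
  shows "e @ drop (length e) P = P \<and> W2 = wconc (Fin (drop (length e) P)) W"
proof (cases W)
  case (Fin w)
  then obtain w2 where W2: "W2 = Fin w2" using eq by (cases W2) auto
  then have "P @ w = e @ w2" using eq Fin by simp
  then show ?thesis using le Fin W2 by (auto simp: append_eq_append_conv_if split: if_splits) (metis append_take_drop_id)
next
  case (Inf g)
  then obtain h where W2: "W2 = Inf h" using eq by (cases W2) auto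
  have fe: "(if m < length P then P ! m else g (m - length P)) =
             (if m < length e then e ! m else h (m - length e))" for m
    using eq Inf W2 by (simp add: fun_eq_iff)
  have "take (length e) P = e"
  proof (rule nth_equalityI)
    show "length (take (length e) P) = length e" using le by simp
    fix i assume "i < length (take (length e) P)"
    then show "take (length e) P ! i = e ! i" using fe[of i] le by auto
  qed
  then have 1: "e @ drop (length e) P = P" by (metis append_take_drop_id)
  have "h j = (if j < length (drop (length e) P) then drop (length e) P ! j
          else g (j - length (drop (length e) P)))" for j
    using fe[of "j + length e"] le by (auto simp: add.commute split: if_splits)
  then show ?thesis using 1 Inf W2 by (simp add: fun_eq_iff)
qed


lemma split_lem:
  assumes eq: "wconc (Fin u) (omega_concat v) = wconc (Fin e) W2"
    and un: "(\<forall>i. v i \<noteq> []) \<or> (\<forall>i. v i = [])"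
  shows "\<exists>k x. e @ x = u @ pre v k \<and> W2 = wconc (Fin x) (omega_concat (\<lambda>i. v (i+k)))"
  using un
proof
  assume ne: "\<forall>i. v i \<noteq> []"
  let ?k = "length e"
  let ?P = "u @ pre v ?k"
  let ?W = "omega_concat (\<lambda>i. v (i + ?k))"
  have "wconc (Fin ?P) ?W = wconc (Fin e) W2"
    using eq omega_shift[OF un, of ?k] by (simp add: wconc_assoc)
  moreover have "length e \<le> length ?P" using pre_len[OF ne, of ?k] by simp
  ultimately have "e @ drop (length e) ?P = ?P \<and> W2 = wconc (Fin (drop (length e) ?P)) ?W"
    by (rule wconc_split)
  then show ?thesis by blast
next
  assume em: "\<forall>i. v i = []"
  then have o: "omega_concat v = Fin []" by (rule omega_empty)
  then obtain y where W2: "W2 = Fin y" using eq by (cases W2) auto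
  then have "u = e @ y" using eq o by simp
  then show ?thesis using W2 o by (intro exI[of _ 0] exI[of _ y]) simp
qed

lemma CDomega_mem: "c \<in> C \<Longrightarrow> \<forall>i. d i \<in> D \<Longrightarrow> wconc (Fin c) (omega_concat d) \<in> CDomega C D"
  unfolding CDomega_def lang_conc_def omega_pow_def by blast

lemma CDomega_E: "z \<in> CDomega C D \<Longrightarrow> \<exists>c d. c \<in> C \<and> (\<forall>i. d i \<in> D) \<and> z = wconc (Fin c) (omega_concat d)"
  unfolding CDomega_def lang_conc_def omega_pow_def by blast

lemma pre_cls:
  assumes "\<forall>i. cls \<delta> F (v i) = cls \<delta> F v0" "cls \<delta> F (u @ v0) = cls \<delta> F u"
  shows "cls \<delta> F (u @ pre v n) = cls \<delta> F u"
proof (induction n)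
  case (Suc n)
  have "cls \<delta> F (u @ pre v (Suc n)) = cls \<delta> F ((u @ pre v n) @ v n)" by simp
  also have "\<dots> = cls \<delta> F (u @ v0)" using cls_app[OF Suc assms(1)[rule_format, of n]] .
  finally show ?case using assms(2) by simp
qed simp

lemma key:
  assumes closed: "\<And>U V z. (U,V) \<in> Cpairs \<delta> F \<Longrightarrow> z \<in> CDomega U V \<Longrightarrow> z \<in> CDomega C D \<Longrightarrow> (U,V) \<in> \<V>"
    and CD: "(C,D) \<in> Cpairs \<delta> F" and A: "A \<in> Qset \<delta> F" and UV: "(U,V) \<in> Cpairs \<delta> F"
    and z1: "z \<in> CDomega U V" and z2: "z \<in> CDomega (cmul \<delta> F A C) D"
  shows "\<exists>C'. (C',V) \<in> \<V> \<and> U = cmul \<delta> F A C'"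
proof -
  obtain a where Aa: "A = cls \<delta> F a" using A Qset_iff by metis
  obtain c d0 where Cc: "C = cls \<delta> F c" and Dd: "D = cls \<delta> F d0" using CD Cpairs_iff by metis
  obtain u0 v0 where Uu: "U = cls \<delta> F u0" and Vv: "V = cls \<delta> F v0"
    and uv: "cls \<delta> F (u0 @ v0) = cls \<delta> F u0" and vv: "cls \<delta> F (v0 @ v0) = cls \<delta> F v0"
    using UV Cpairs_iff by metis
  obtain u v where u: "u \<in> U" and v: "\<forall>i. v i \<in> V" and zu: "z = wconc (Fin u) (omega_concat v)"
    using CDomega_E[OF z1] by blast
  obtain e d where e: "e \<in> cmul \<delta> F A C" and d: "\<forall>i. d i \<in> D" and ze: "z = wconc (Fin e) (omega_concat d)"
    using CDomega_E[OF z2] by blast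
  have ecls: "cls \<delta> F e = cls \<delta> F (a @ c)" using e by (simp add: Aa Cc cmul_cls mem_cls)
  have un: "(\<forall>i. v i \<noteq> []) \<or> (\<forall>i. v i = [])" using cls_uniform[of v \<delta> F v0] v Vv by blast
  obtain k x where ex: "e @ x = u @ pre v k"
    and dx: "omega_concat d = wconc (Fin x) (omega_concat (\<lambda>i. v (i+k)))"
    using split_lem[OF _ un, of u e "omega_concat d"] zu ze by auto
  define C' where "C' = cls \<delta> F (c @ x @ v k)"
  have vcls: "\<forall>i. cls \<delta> F (v i) = cls \<delta> F v0" using v Vv mem_cls[of _ \<delta> F v0] by blast
  have unk: "(\<forall>i. v (i+k) \<noteq> []) \<or> (\<forall>i. v (i+k) = [])" using un by blast
  have "omega_concat (\<lambda>i. v (i+k)) = wconc (Fin (pre (\<lambda>i. v (i+k)) 1)) (omega_concat (\<lambda>i. v (i+1+k)))"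
    using omega_shift[OF unk, of 1] by simp
  also have "\<dots> = wconc (Fin (v k)) (omega_concat (\<lambda>i. v (i + Suc k)))" by simp
  finally have z': "wconc (Fin c) (omega_concat d) = wconc (Fin (c @ x @ v k)) (omega_concat (\<lambda>i. v (i + Suc k)))"
    using dx by (simp add: wconc_assoc)
  have zC: "wconc (Fin c) (omega_concat d) \<in> CDomega C D"
    using CDomega_mem[OF _ d, of c C] cls_self[of c \<delta> F] Cc by simp
  have "\<forall>i. v (i + Suc k) \<in> V" using v by blast
  then have zC': "wconc (Fin c) (omega_concat d) \<in> CDomega C' V"
    unfolding z' C'_def by (rule CDomega_mem[OF cls_self])
  have "cls \<delta> F (v k @ v0) = cls \<delta> F (v k)"
    using cls_app[OF vcls[rule_format, of k] refl[of "cls \<delta> F v0"]] vv vcls by simp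
  then have "cls \<delta> F ((c @ x) @ (v k @ v0)) = cls \<delta> F ((c @ x) @ v k)"
    using cls_app by blast
  then have "(C', V) \<in> Cpairs \<delta> F" unfolding Cpairs_iff C'_def Vv using vv by (intro exI[of _ "c @ x @ v k"] exI[of _ v0]) simp
  then have inV: "(C', V) \<in> \<V>" using closed zC zC' by blast
  have "cmul \<delta> F A C' = cls \<delta> F ((a @ c) @ (x @ v k))" by (simp add: Aa C'_def cmul_cls)
  also have "\<dots> = cls \<delta> F (e @ (x @ v k))" using cls_app[OF ecls refl] by simp
  also have "\<dots> = cls \<delta> F (u @ pre v (Suc k))" using ex by (metis append.assoc pre_Suc)
  also have "\<dots> = cls \<delta> F u"
  proof (rule pre_cls[OF vcls])
    have "cls \<delta> F u = cls \<delta> F u0" using u Uu mem_cls by metis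
    then show "cls \<delta> F (u @ v0) = cls \<delta> F u" using cls_app uv by metis
  qed
  also have "\<dots> = U" using u Uu mem_cls by metis
  finally show ?thesis using inV by blast
qed

theorem lemma10:
  fixes \<delta> :: "'q::finite \<Rightarrow> 'a::finite \<Rightarrow> 'q set"
    and F :: "'q set"
    and \<U> :: "'a list set set" and \<V> :: "('a list set \<times> 'a list set) set"
  assumes "\<U> \<in> M_star \<delta> F" and "\<V> \<in> M_le_omega \<delta> F"
  shows "Mprod \<delta> F \<U> \<V> \<in> M_le_omega \<delta> F"
proof -
  have U: "\<U> \<subseteq> Qset \<delta> F" using assms(1) by (simp add: M_star_def)
  have Vs: "\<V> \<subseteq> Cpairs \<delta> F" and Vc: "fmap \<delta> F (gmap \<V>) = \<V>" using assms(2) by (auto simp: M_le_omega_def)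
  have closed: "(U,V) \<in> \<V>" if "(C,D) \<in> \<V>" "(U,V) \<in> Cpairs \<delta> F" "z \<in> CDomega U V" "z \<in> CDomega C D"
    for C D U V z
  proof -
    have "z \<in> gmap \<V>" unfolding gmap_def using that by blast
    then have "(U,V) \<in> fmap \<delta> F (gmap \<V>)" unfolding fmap_def using that by blast
    then show ?thesis using Vc by simp
  qed
  let ?M = "Mprod \<delta> F \<U> \<V>"
  have memM: "p \<in> ?M \<longleftrightarrow> (\<exists>A C D. p = (cmul \<delta> F A C, D) \<and> A \<in> \<U> \<and> (C,D) \<in> \<V>)" for p
    unfolding Mprod_def by (rule mem_Collect_eq)
  have sub: "?M \<subseteq> Cpairs \<delta> F"
  proof
    fix p assume "p \<in> ?M"
    then obtain A C D where p: "p = (cmul \<delta> F A C, D)" and A: "A \<in> \<U>" and CD: "(C,D) \<in> \<V>"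
      using memM by blast
    have "A \<in> Qset \<delta> F" using A U by blast
    then obtain a where Aa: "A = cls \<delta> F a" unfolding Qset_iff by blast
    have "(C,D) \<in> Cpairs \<delta> F" using CD Vs by blast
    obtain c d where Cc: "C = cls \<delta> F c" and Dd: "D = cls \<delta> F d"
      and cd: "cls \<delta> F (c @ d) = cls \<delta> F c" and dd: "cls \<delta> F (d @ d) = cls \<delta> F d"
      using \<open>(C,D) \<in> Cpairs \<delta> F\<close> unfolding Cpairs_iff by blast
    have "cls \<delta> F (a @ (c @ d)) = cls \<delta> F (a @ c)" using cls_app cd by blast
    then show "p \<in> Cpairs \<delta> F" unfolding p Cpairs_iff Aa Cc Dd cmul_cls using dd
      by (intro exI[of _ "a @ c"] exI[of _ d]) simp
  qed
  have ne: "\<exists>z. z \<in> CDomega U V" if UVp: "(U,V) \<in> Cpairs \<delta> F" for U V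
  proof -
    obtain u v where uv: "U = cls \<delta> F u" "V = cls \<delta> F v" using UVp unfolding Cpairs_iff by blast
    have "wconc (Fin u) (omega_concat (\<lambda>_. v)) \<in> CDomega U V"
      using CDomega_mem[of u U "\<lambda>_. v" V] cls_self[of u \<delta> F] cls_self[of v \<delta> F] uv by simp
    then show ?thesis by blast
  qed
  have fg: "fmap \<delta> F (gmap ?M) = ?M"
  proof (intro set_eqI iffI)
    fix p assume "p \<in> ?M"
    moreover obtain U V where pUV: "p = (U,V)" by (cases p) auto
    ultimately have pC: "(U,V) \<in> Cpairs \<delta> F" using sub by blast
    then obtain z where "z \<in> CDomega U V" using ne by blast
    then have "z \<in> gmap ?M" unfolding gmap_def using \<open>p \<in> ?M\<close> pUV by blast
    then show "p \<in> fmap \<delta> F (gmap ?M)" unfolding fmap_def using pC pUV \<open>z \<in> CDomega U V\<close> by blast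
  next
    fix p assume "p \<in> fmap \<delta> F (gmap ?M)"
    then obtain U V z X D where pUV: "p = (U,V)" and pC: "(U,V) \<in> Cpairs \<delta> F" and z1: "z \<in> CDomega U V"
      and XD: "(X,D) \<in> ?M" and z2: "z \<in> CDomega X D"
      unfolding fmap_def gmap_def by blast
    then obtain A C where X: "X = cmul \<delta> F A C" and A: "A \<in> \<U>" and CD: "(C,D) \<in> \<V>"
      using memM[of "(X,D)"] by auto
    have CDp: "(C,D) \<in> Cpairs \<delta> F" using CD Vs by blast
    have Aq: "A \<in> Qset \<delta> F" using A U by blast
    have z2': "z \<in> CDomega (cmul \<delta> F A C) D" using z2 X by simp
    have cl: "\<And>U V z. (U,V) \<in> Cpairs \<delta> F \<Longrightarrow> z \<in> CDomega U V \<Longrightarrow> z \<in> CDomega C D \<Longrightarrow> (U,V) \<in> \<V>"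
      using closed CD by blast
    have "\<exists>C'. (C',V) \<in> \<V> \<and> U = cmul \<delta> F A C'"
      by (rule key[OF cl CDp Aq pC z1 z2'])
    then obtain C' where "(C',V) \<in> \<V>" "U = cmul \<delta> F A C'" by blast
    then show "p \<in> ?M" using memM[of p] pUV A by blast
  qed
  show ?thesis using sub fg unfolding M_le_omega_def by blast
qed

end
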